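(* Let $A$ be a commutative subalgebra of a $K$-algebra $E$, let $A'$ be a non-empty subset of $A$, let $\Delta=\{\mathrm{ad}_a\mid a\in A'\}$, let $\mathfrak{a}$ be a nonzero ideal of $N_\Delta(E)$ and $\mathfrak{a}_0=\mathfrak{a}\cap N_\Delta(E)_0=\mathfrak{a}\cap E^\Delta$. Then: (1) $\mathfrak{a}_0$ is a nonzero ideal of the algebra $N_\Delta(E)_0=E^\Delta=C_E(A')$, and $\mathfrak{a}'=N_\Delta(E)\mathfrak{a}_0N_\Delta(E)$ is a nonzero ideal of $N_\Delta(E)$ with $\mathfrak{a}'\cap N_\Delta(E)_0=\mathfrak{a}_0$. (2) If, in addition, $N_\Delta(E)_0$ is commutative, then $[N_\Delta(E)_1,\mathfrak{a}_0]\subseteq\mathfrak{a}_0$.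
   Context: $\mathrm{ad}_a(f)=[a,f]=af-fa$. For $i\geq 1$, $\Delta^i=\{\delta_1\cdots\delta_i\mid\delta_j\in\Delta\}$; $N_\Delta(E)_i=\{e\in E\mid\Delta^{i+1}e=0\}$ for $i\geq0$, $N_\Delta(E)=\bigcup_{i\ge0}N_\Delta(E)_i$, $E^\Delta=\bigcap_{\delta\in\Delta}\ker\delta$. $C_E(A')=\{e\in E\mid ea=ae \text{ for all } a\in A'\}$. *)

theory Defs
  imports Main
begin

text \<open>A (unital, associative) K-algebra E: a ring E together with a ring
homomorphism from the field K into the centre of E (the scalar action is
k \<cdot> e = scal k * e).\<close>
definition K_algebra :: "('k::field \<Rightarrow> 'e::ring_1) \<Rightarrow> bool" where
  "K_algebra scal \<longleftrightarrow>
     (\<forall>x y. scal (x + y) = scal x + scal y) \<and>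
     (\<forall>x y. scal (x * y) = scal x * scal y) \<and>
     scal 1 = 1 \<and>
     (\<forall>k e. scal k * e = e * scal k)"

definition subspace_K :: "('k::field \<Rightarrow> 'e::ring_1) \<Rightarrow> 'e set \<Rightarrow> bool" where
  "subspace_K scal V \<longleftrightarrow> 0 \<in> V \<and> (\<forall>x\<in>V. \<forall>y\<in>V. x + y \<in> V) \<and>
     (\<forall>k. \<forall>x\<in>V. scal k * x \<in> V)"

definition subalgebra :: "('k::field \<Rightarrow> 'e::ring_1) \<Rightarrow> 'e set \<Rightarrow> bool" where
  "subalgebra scal A \<longleftrightarrow> subspace_K scal A \<and> 1 \<in> A \<and> (\<forall>x\<in>A. \<forall>y\<in>A. x * y \<in> A)"

definition commutative_set :: "'e::ring_1 set \<Rightarrow> bool" where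
  "commutative_set S \<longleftrightarrow> (\<forall>x\<in>S. \<forall>y\<in>S. x * y = y * x)"

definition alg_ideal :: "('k::field \<Rightarrow> 'e::ring_1) \<Rightarrow> 'e set \<Rightarrow> 'e set \<Rightarrow> bool" where
  "alg_ideal scal S I \<longleftrightarrow> I \<subseteq> S \<and> subspace_K scal I \<and>
     (\<forall>s\<in>S. \<forall>x\<in>I. s * x \<in> I \<and> x * s \<in> I)"

definition ad :: "'e::ring_1 \<Rightarrow> 'e \<Rightarrow> 'e" where
  "ad a f = a * f - f * a"

definition op_pow :: "('e \<Rightarrow> 'e) set \<Rightarrow> nat \<Rightarrow> ('e \<Rightarrow> 'e) set" where
  "op_pow D i = {foldr (\<circ>) ds id | ds. length ds = i \<and> set ds \<subseteq> D}"

definition N_level :: "('e::ring_1 \<Rightarrow> 'e) set \<Rightarrow> nat \<Rightarrow> 'e set" where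
  "N_level D i = {e. \<forall>\<delta>\<in>op_pow D (Suc i). \<delta> e = 0}"

definition N_all :: "('e::ring_1 \<Rightarrow> 'e) set \<Rightarrow> 'e set" where
  "N_all D = (\<Union>i. N_level D i)"

definition const_set :: "('e::ring_1 \<Rightarrow> 'e) set \<Rightarrow> 'e set" where
  "const_set D = (\<Inter>\<delta>\<in>D. {e. \<delta> e = 0})"

definition centralizer :: "'e::ring_1 set \<Rightarrow> 'e set" where
  "centralizer S = {e. \<forall>a\<in>S. e * a = a * e}"

inductive_set K_span :: "('k::field \<Rightarrow> 'e::ring_1) \<Rightarrow> 'e set \<Rightarrow> 'e set"
  for scal :: "'k \<Rightarrow> 'e" and X :: "'e set" where
  span_zero: "0 \<in> K_span scal X"
| span_gen: "x \<in> X \<Longrightarrow> x \<in> K_span scal X"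
| span_add: "x \<in> K_span scal X \<Longrightarrow> y \<in> K_span scal X \<Longrightarrow> x + y \<in> K_span scal X"
| span_smult: "x \<in> K_span scal X \<Longrightarrow> scal k * x \<in> K_span scal X"

definition ideal_prod :: "('k::field \<Rightarrow> 'e::ring_1) \<Rightarrow> 'e set \<Rightarrow> 'e set \<Rightarrow> 'e set" where
  "ideal_prod scal N I = K_span scal {n * x * m | n x m. n \<in> N \<and> x \<in> I \<and> m \<in> N}"

end

theory Submission
  imports Defs
begin

definition Lv :: "('e::ring_1 \<Rightarrow> 'e) set \<Rightarrow> nat \<Rightarrow> 'e set" where
  "Lv D n = {e. \<forall>ds. length ds = n \<and> set ds \<subseteq> D \<longrightarrow> foldr (\<circ>) ds id e = 0}"

lemma foldr_comp_gen: "foldr (\<circ>) ds g = foldr (\<circ>) ds id \<circ> g"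
  by (induction ds) auto

lemma N_level_Lv: "N_level D i = Lv D (Suc i)"
  unfolding N_level_def op_pow_def Lv_def by auto

lemma Lv_0: "Lv D 0 = {0}"
  unfolding Lv_def by auto

lemma Lv_Suc: "Lv D (Suc n) = {e. \<forall>\<delta>\<in>D. \<delta> e \<in> Lv D n}"
proof (intro set_eqI iffI)
  fix e assume e: "e \<in> Lv D (Suc n)"
  show "e \<in> {e. \<forall>\<delta>\<in>D. \<delta> e \<in> Lv D n}"
  proof (intro CollectI ballI)
    fix \<delta> assume d: "\<delta> \<in> D"
    show "\<delta> e \<in> Lv D n" unfolding Lv_def
    proof (intro CollectI allI impI)
      fix ds assume ds: "length ds = n \<and> set ds \<subseteq> D"
      have "length (ds @ [\<delta>]) = Suc n \<and> set (ds @ [\<delta>]) \<subseteq> D" using ds d by auto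
      then have "foldr (\<circ>) (ds @ [\<delta>]) id e = 0" using e unfolding Lv_def by blast
      then show "foldr (\<circ>) ds id (\<delta> e) = 0"
        by (simp add: foldr_comp_gen[of ds "\<delta>"])
    qed
  qed
next
  fix e assume e: "e \<in> {e. \<forall>\<delta>\<in>D. \<delta> e \<in> Lv D n}"
  show "e \<in> Lv D (Suc n)" unfolding Lv_def
  proof (intro CollectI allI impI)
    fix ds :: "('a \<Rightarrow> 'a) list" assume ds: "length ds = Suc n \<and> set ds \<subseteq> D"
    then obtain ds' \<delta> where eq: "ds = ds' @ [\<delta>]"
      by (metis Zero_neq_Suc list.size(3) rev_exhaust)
    have "\<delta> e \<in> Lv D n" using e ds eq by auto
    then have "foldr (\<circ>) ds' id (\<delta> e) = 0" using ds eq unfolding Lv_def by auto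
    then show "foldr (\<circ>) ds id e = 0" using eq
      by (simp add: foldr_comp_gen[of ds' "\<delta>"])
  qed
qed

locale derset =
  fixes D :: "('e::ring_1 \<Rightarrow> 'e) set" and scal :: "'k::field \<Rightarrow> 'e"
  assumes der: "\<And>\<delta> x y. \<delta> \<in> D \<Longrightarrow> \<delta> (x * y) = \<delta> x * y + x * \<delta> y"
    and add: "\<And>\<delta> x y. \<delta> \<in> D \<Longrightarrow> \<delta> (x + y) = \<delta> x + \<delta> y"
    and sc: "\<And>\<delta> k x. \<delta> \<in> D \<Longrightarrow> \<delta> (scal k * x) = scal k * \<delta> x"
begin

lemma zero: "\<delta> \<in> D \<Longrightarrow> \<delta> 0 = 0"
  using add[of \<delta> 0 0] by simp

lemma fold_add: "set ds \<subseteq> D \<Longrightarrow> foldr (\<circ>) ds id (x + y) = foldr (\<circ>) ds id x + foldr (\<circ>) ds id y"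
  by (induction ds) (auto simp: add)

lemma fold_sc: "set ds \<subseteq> D \<Longrightarrow> foldr (\<circ>) ds id (scal k * x) = scal k * foldr (\<circ>) ds id x"
  by (induction ds) (auto simp: sc)

lemma Lv_zero: "0 \<in> Lv D n"
proof -
  have "set ds \<subseteq> D \<Longrightarrow> foldr (\<circ>) ds id 0 = 0" for ds
    by (induction ds) (auto simp: zero)
  then show ?thesis unfolding Lv_def by auto
qed

lemma Lv_add: "x \<in> Lv D n \<Longrightarrow> y \<in> Lv D n \<Longrightarrow> x + y \<in> Lv D n"
  unfolding Lv_def by (auto simp: fold_add)

lemma Lv_sc: "x \<in> Lv D n \<Longrightarrow> scal k * x \<in> Lv D n"
  unfolding Lv_def by (auto simp: fold_sc)

lemma Lv_Suc_mono: "x \<in> Lv D n \<Longrightarrow> x \<in> Lv D (Suc n)"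
proof -
  assume x: "x \<in> Lv D n"
  show ?thesis unfolding Lv_def
  proof (intro CollectI allI impI)
    fix ds :: "('e \<Rightarrow> 'e) list" assume ds: "length ds = Suc n \<and> set ds \<subseteq> D"
    then obtain \<delta> ds' where eq: "ds = \<delta> # ds'" by (cases ds) auto
    then show "foldr (\<circ>) ds id x = 0" using x ds unfolding Lv_def by (auto simp: zero)
  qed
qed

lemma Lv_mono: "m \<le> n \<Longrightarrow> x \<in> Lv D m \<Longrightarrow> x \<in> Lv D n"
  by (induction n rule: dec_induct) (auto intro: Lv_Suc_mono)

lemma Lv_mult: "x \<in> Lv D (Suc i) \<Longrightarrow> y \<in> Lv D (Suc j) \<Longrightarrow> x * y \<in> Lv D (Suc (i + j))"
proof (induction "i + j" arbitrary: i j x y rule: less_induct)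
  case less
  show ?case unfolding Lv_Suc
  proof (intro CollectI ballI)
    fix \<delta> assume d: "\<delta> \<in> D"
    have dx: "\<delta> x \<in> Lv D i" and dy: "\<delta> y \<in> Lv D j" using less.prems d Lv_Suc by auto
    have t1: "\<delta> x * y \<in> Lv D (i + j)"
    proof (cases i)
      case 0
      then have "\<delta> x = 0" using dx by (simp add: Lv_0)
      then show ?thesis by (simp add: Lv_zero)
    next
      case (Suc i') then show ?thesis using less.hyps[of i' j "\<delta> x" y] dx less.prems by auto
    qed
    have t2: "x * \<delta> y \<in> Lv D (i + j)"
    proof (cases j)
      case 0
      then have "\<delta> y = 0" using dy by (simp add: Lv_0)
      then show ?thesis by (simp add: Lv_zero)
    next
      case (Suc j') then show ?thesis using less.hyps[of i j' x "\<delta> y"] dy less.prems by auto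
    qed
    show "\<delta> (x * y) \<in> Lv D (i + j)" using der[OF d] Lv_add[OF t1 t2] by simp
  qed
qed

lemma nonzero_const:
  assumes "x \<in> Lv D (Suc i)" "x \<in> I" "x \<noteq> 0" "\<And>\<delta> z. \<delta> \<in> D \<Longrightarrow> z \<in> I \<Longrightarrow> \<delta> z \<in> I"
  shows "\<exists>y \<in> I \<inter> Lv D 1. y \<noteq> 0"
  using assms(1-3)
proof (induction i arbitrary: x)
  case 0 then show ?case by auto
next
  case (Suc i)
  show ?case
  proof (cases "x \<in> Lv D 1")
    case True then show ?thesis using Suc by auto
  next
    case False
    then obtain \<delta> where d: "\<delta> \<in> D" "\<delta> x \<noteq> 0" using Lv_Suc[of D 0] Lv_0 by auto
    have "\<delta> x \<in> Lv D (Suc i)" using Suc.prems(1) d Lv_Suc by blast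
    then show ?thesis using Suc.IH[of "\<delta> x"] d assms(4) Suc.prems by auto
  qed
qed

end

theorem theorem1p7:
  fixes scal :: "'k::field \<Rightarrow> 'e::ring_1"
    and A A' \<aa> :: "'e set"
  assumes alg: "K_algebra scal"
    and subA: "subalgebra scal A" and commA: "commutative_set A"
    and A'_sub: "A' \<subseteq> A" and A'_ne: "A' \<noteq> {}"
    and ideal_a: "alg_ideal scal (N_all (ad ` A')) \<aa>"
    and a_nz: "\<aa> \<noteq> {0}"
  shows "N_level (ad ` A') 0 = const_set (ad ` A')
      \<and> const_set (ad ` A') = centralizer A'
      \<and> \<aa> \<inter> N_level (ad ` A') 0 = \<aa> \<inter> const_set (ad ` A')
      \<and> alg_ideal scal (N_level (ad ` A') 0) (\<aa> \<inter> N_level (ad ` A') 0)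
      \<and> \<aa> \<inter> N_level (ad ` A') 0 \<noteq> {0}
      \<and> alg_ideal scal (N_all (ad ` A'))
          (ideal_prod scal (N_all (ad ` A')) (\<aa> \<inter> N_level (ad ` A') 0))
      \<and> ideal_prod scal (N_all (ad ` A')) (\<aa> \<inter> N_level (ad ` A') 0) \<noteq> {0}
      \<and> ideal_prod scal (N_all (ad ` A')) (\<aa> \<inter> N_level (ad ` A') 0) \<inter> N_level (ad ` A') 0
          = \<aa> \<inter> N_level (ad ` A') 0
      \<and> (commutative_set (N_level (ad ` A') 0) \<longrightarrow>
          {ad x y | x y. x \<in> N_level (ad ` A') 1 \<and> y \<in> \<aa> \<inter> N_level (ad ` A') 0}
            \<subseteq> \<aa> \<inter> N_level (ad ` A') 0)"
proof -
  define D where "D = ad ` A'"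
  define N where "N = N_all D"
  define N0 where "N0 = N_level D 0"
  have central: "scal k * e = e * scal k" for k e using alg unfolding K_algebra_def by auto
  interpret derset D scal
  proof
    fix \<delta> x y assume "\<delta> \<in> D"
    then obtain a where "\<delta> = ad a" unfolding D_def by auto
    then show "\<delta> (x * y) = \<delta> x * y + x * \<delta> y" "\<delta> (x + y) = \<delta> x + \<delta> y"
      by (simp_all add: ad_def algebra_simps)
  next
    fix \<delta> k x assume "\<delta> \<in> D"
    then obtain a where a: "\<delta> = ad a" unfolding D_def by auto
    have "a * (scal k * x) = scal k * (a * x)"
      by (metis central mult.assoc)
    then show "\<delta> (scal k * x) = scal k * \<delta> x"
      by (simp add: a ad_def algebra_simps)
  qed
  have N0_eq: "N0 = {e. \<forall>\<delta>\<in>D. \<delta> e = 0}"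
    unfolding N0_def N_level_Lv Lv_Suc Lv_0 by auto
  have c1: "N0 = const_set D" unfolding N0_eq const_set_def by auto
  have ad0: "ad a e = 0 \<longleftrightarrow> e * a = a * e" for a e by (auto simp: ad_def)
  have c2: "const_set D = centralizer A'"
    unfolding const_set_def centralizer_def D_def by (auto simp: ad0)
  have N_mem: "x \<in> N \<longleftrightarrow> (\<exists>i. x \<in> Lv D (Suc i))" for x
    unfolding N_def N_all_def N_level_Lv by auto
  have N0_N: "N0 \<subseteq> N" unfolding N0_def N_def N_all_def by auto
  have N0_Lv: "N0 = Lv D 1" unfolding N0_def N_level_Lv by simp
  have N_mult: "x \<in> N \<Longrightarrow> y \<in> N \<Longrightarrow> x * y \<in> N" for x y
    unfolding N_mem using Lv_mult by blast
  have N0_mult: "x \<in> N0 \<Longrightarrow> y \<in> N0 \<Longrightarrow> x * y \<in> N0" for x y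
    unfolding N0_Lv using Lv_mult[of x 0 y 0] by simp
  have N_sc: "x \<in> N \<Longrightarrow> scal k * x \<in> N" for x k
    unfolding N_mem using Lv_sc by blast
  have N_add: "x \<in> N \<Longrightarrow> y \<in> N \<Longrightarrow> x + y \<in> N" for x y
  proof -
    assume "x \<in> N" "y \<in> N"
    then obtain i j where "x \<in> Lv D (Suc i)" "y \<in> Lv D (Suc j)" unfolding N_mem by auto
    then have "x \<in> Lv D (Suc (i+j))" "y \<in> Lv D (Suc (i+j))"
      using Lv_mono[of "Suc i" "Suc (i+j)" x] Lv_mono[of "Suc j" "Suc (i+j)" y] by auto
    then show ?thesis unfolding N_mem using Lv_add by blast
  qed
  have a_sub: "\<aa> \<subseteq> N" and a_0: "0 \<in> \<aa>"
    and a_add: "\<And>x y. x \<in> \<aa> \<Longrightarrow> y \<in> \<aa> \<Longrightarrow> x + y \<in> \<aa>"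
    and a_sc: "\<And>k x. x \<in> \<aa> \<Longrightarrow> scal k * x \<in> \<aa>"
    and a_mul: "\<And>s x. s \<in> N \<Longrightarrow> x \<in> \<aa> \<Longrightarrow> s * x \<in> \<aa> \<and> x * s \<in> \<aa>"
    using ideal_a unfolding alg_ideal_def subspace_K_def N_def D_def by auto
  have scal0: "scal 0 = 0" using alg unfolding K_algebra_def by (metis add_cancel_right_right add_0)
  have scalm1: "scal (-1) = -1"
  proof -
    have "scal (-1) + scal 1 = scal 0" using alg unfolding K_algebra_def by (metis add.left_inverse)
    then show ?thesis using alg scal0 unfolding K_algebra_def by (simp add: add_eq_0_iff2)
  qed
  have a_diff: "x \<in> \<aa> \<Longrightarrow> y \<in> \<aa> \<Longrightarrow> x - y \<in> \<aa>" for x y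
    using a_add[of x "scal (-1) * y"] a_sc[of y "-1"] scalm1 by simp
  have one_N0: "1 \<in> N0" unfolding N0_eq D_def ad_def by auto
  have one_N: "1 \<in> N" using one_N0 N0_N by auto
  have A'_N0: "A' \<subseteq> N0" unfolding N0_eq D_def ad_def
    using commA A'_sub unfolding commutative_set_def by auto
  have D_a: "\<delta> \<in> D \<Longrightarrow> z \<in> \<aa> \<Longrightarrow> \<delta> z \<in> \<aa>" for \<delta> z
  proof -
    assume d: "\<delta> \<in> D" and z: "z \<in> \<aa>"
    then obtain a where a: "a \<in> A'" "\<delta> = ad a" unfolding D_def by auto
    then have "a \<in> N" using A'_N0 N0_N by auto
    then show ?thesis using a a_mul[OF _ z] a_diff unfolding ad_def by auto
  qed
  have N0_add: "x \<in> N0 \<Longrightarrow> y \<in> N0 \<Longrightarrow> x + y \<in> N0" for x y unfolding N0_Lv by (rule Lv_add)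
  have N0_sc: "x \<in> N0 \<Longrightarrow> scal k * x \<in> N0" for x k unfolding N0_Lv by (rule Lv_sc)
  have N0_0: "0 \<in> N0" unfolding N0_Lv by (rule Lv_zero)
  define a0 where "a0 = \<aa> \<inter> N0"
  have id0: "alg_ideal scal N0 a0"
    unfolding alg_ideal_def subspace_K_def a0_def
    using a_0 N0_0 a_add N0_add a_sc N0_sc a_mul N0_N N0_mult by auto
  obtain x where x: "x \<in> \<aa>" "x \<noteq> 0" using a_nz a_0 by blast
  then obtain i where "x \<in> Lv D (Suc i)" using a_sub N_mem by blast
  then obtain y where y: "y \<in> a0" "y \<noteq> 0"
    using nonzero_const[of x i \<aa>] x D_a unfolding a0_def N0_Lv by auto
  have nz0: "a0 \<noteq> {0}" using y by auto
  define P where "P = ideal_prod scal N a0"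
  have P_a: "z \<in> P \<Longrightarrow> z \<in> \<aa> \<and> z \<in> N" for z
    unfolding P_def ideal_prod_def
  proof (induction rule: K_span.induct)
    case span_zero then show ?case using a_0 one_N0 N0_N a_sub by auto
  next
    case (span_gen x)
    then obtain n u m where "x = n * u * m" "n \<in> N" "u \<in> a0" "m \<in> N" by auto
    then show ?case using a_mul a_sub N_mult unfolding a0_def by (metis IntD1 subsetD)
  next
    case (span_add x y) then show ?case using a_add N_add by auto
  next
    case (span_smult x k) then show ?case using a_sc N_sc by auto
  qed
  have P_mul: "z \<in> P \<Longrightarrow> s \<in> N \<Longrightarrow> s * z \<in> P \<and> z * s \<in> P" for z s
    unfolding P_def ideal_prod_def
  proof (induction rule: K_span.induct)
    case span_zero then show ?case by (auto intro: K_span.span_zero)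
  next
    case (span_gen x)
    then obtain n u m where e: "x = n * u * m" "n \<in> N" "u \<in> a0" "m \<in> N" by auto
    have "s * x = (s * n) * u * m" "x * s = n * u * (m * s)" using e by (simp_all add: mult.assoc)
    moreover have "s * n \<in> N" "m * s \<in> N" using e span_gen.prems N_mult by auto
    ultimately have "s * x \<in> {n * x * m | n x m. n \<in> N \<and> x \<in> a0 \<and> m \<in> N}"
      "x * s \<in> {n * x * m | n x m. n \<in> N \<and> x \<in> a0 \<and> m \<in> N}" using e by blast+
    then show ?case by (auto intro: K_span.span_gen)
  next
    case (span_add x y) then show ?case by (auto simp: distrib_left distrib_right intro: K_span.span_add)
  next
    case (span_smult x k)
    have "s * (scal k * x) = scal k * (s * x)" by (metis central mult.assoc)
    moreover have "(scal k * x) * s = scal k * (x * s)" by (simp add: mult.assoc)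
    ultimately show ?case using span_smult by (auto intro: K_span.span_smult)
  qed
  have a0_P: "z \<in> a0 \<Longrightarrow> z \<in> P" for z
  proof -
    assume z: "z \<in> a0"
    have "1 * z * 1 \<in> {n * x * m | n x m. n \<in> N \<and> x \<in> a0 \<and> m \<in> N}" using z one_N by blast
    then show ?thesis unfolding P_def ideal_prod_def by (auto intro: K_span.span_gen)
  qed
  have P0: "0 \<in> P" unfolding P_def ideal_prod_def by (rule K_span.span_zero)
  have Padd: "x \<in> P \<Longrightarrow> y \<in> P \<Longrightarrow> x + y \<in> P" for x y
    unfolding P_def ideal_prod_def by (rule K_span.span_add)
  have Psc: "x \<in> P \<Longrightarrow> scal k * x \<in> P" for x k
    unfolding P_def ideal_prod_def by (rule K_span.span_smult)
  have idP: "alg_ideal scal N P"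
    unfolding alg_ideal_def subspace_K_def using P_a P_mul P0 Padd Psc by blast
  have nzP: "P \<noteq> {0}" using y a0_P by auto
  have PN0: "P \<inter> N0 = a0" using P_a a0_P unfolding a0_def by auto
  have part2: "commutative_set N0 \<Longrightarrow>
     {ad x y | x y. x \<in> N_level D 1 \<and> y \<in> a0} \<subseteq> a0"
  proof
    fix z assume cm: "commutative_set N0" and "z \<in> {ad x y | x y. x \<in> N_level D 1 \<and> y \<in> a0}"
    then obtain x y where z: "z = ad x y" and x: "x \<in> N_level D 1" and y: "y \<in> a0" by auto
    have xN: "x \<in> N" using x unfolding N_def N_all_def by auto
    have za: "z \<in> \<aa>" using z a_mul[OF xN] y a_diff unfolding a0_def ad_def by auto
    have "\<delta> z = 0" if d: "\<delta> \<in> D" for \<delta>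
    proof -
      obtain a where a: "\<delta> = ad a" using d unfolding D_def by auto
      have dy: "\<delta> y = 0" using y d unfolding a0_def N0_eq by auto
      have dx: "\<delta> x \<in> N0" using x d unfolding N0_Lv N_level_Lv by (simp add: Lv_Suc)
      have yN0: "y \<in> N0" using y unfolding a0_def by auto
      have c: "\<delta> x * y = y * \<delta> x" using cm dx yN0 unfolding commutative_set_def by auto
      have "\<delta> z = \<delta> (x * y) - \<delta> (y * x)" unfolding z a ad_def by (simp add: algebra_simps)
      also have "\<dots> = \<delta> x * y - y * \<delta> x" using der[OF d, of x y] der[OF d, of y x] dy by simp
      finally show ?thesis using c by simp
    qed
    then have "z \<in> N0" unfolding N0_eq by auto
    then show "z \<in> a0" using za unfolding a0_def by auto
  qed
  have c3: "\<aa> \<inter> N0 = \<aa> \<inter> const_set D" using c1 by simp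
  have *: "N0 = const_set D \<and> const_set D = centralizer A' \<and> \<aa> \<inter> N0 = \<aa> \<inter> const_set D
     \<and> alg_ideal scal N0 a0 \<and> a0 \<noteq> {0} \<and> alg_ideal scal N P \<and> P \<noteq> {0} \<and> P \<inter> N0 = a0
     \<and> (commutative_set N0 \<longrightarrow> {ad x y | x y. x \<in> N_level D 1 \<and> y \<in> a0} \<subseteq> a0)"
    using c1 c2 c3 id0 nz0 idP nzP PN0 part2 by blast
  show ?thesis using * unfolding P_def a0_def N0_def N_def D_def .
qed

end
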